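(* $\bigcap \mathcal{L}(S_{r,N})=\{\{n\}: n\in\mathbb{N}\}$, where the intersection is taken over all nontrivial atomic exponential Puiseux semirings $S_{r,N}$ (i.e., over all numerical monoids $N$ and all $r\in\mathbb{Q}_{>0}\setminus\mathbb{N}$ with $\mathsf{n}(r)>1$).
   Context: $\mathbb{N}=\{0,1,2,\dots\}$. A numerical monoid $N$ is an additive submonoid of $\mathbb{N}$ with finite complement in $\mathbb{N}$. For $r\in\mathbb{Q}_{>0}$ write $r=\mathsf{n}(r)/\mathsf{d}(r)$ in lowest terms. The exponential Puiseux semiring $S_{r,N}$ is the additive submonoid of $\mathbb{Q}_{\ge0}$ generated by $\{r^k:k\in N\}$; it is called nontrivial if $r\notin\mathbb{N}$, and for $r\notin\mathbb{N}$ it is atomic iff $\mathsf{n}(r)>1$, with atoms $r^s$, $s\in N$. For an atomic monoid $M$, $\mathsf{L}(x)$ is the set of lengths of factorizations of $x$ into atoms ($\mathsf{L}(0)=\{0\}$), and $\mathcal{L}(M)=\{\mathsf{L}(x):x\in M\}$ is its system of sets of lengths. *)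

theory Defs
  imports Complex_Main "HOL-Library.Multiset"
begin

definition numerical_monoid :: "nat set \<Rightarrow> bool" where
  "numerical_monoid N \<longleftrightarrow> 0 \<in> N \<and> (\<forall>a\<in>N. \<forall>b\<in>N. a + b \<in> N) \<and> finite (UNIV - N)"

definition gen_monoid :: "rat set \<Rightarrow> rat set" where
  "gen_monoid G = {sum_mset F | F. set_mset F \<subseteq> G}"

definition exp_puiseux :: "rat \<Rightarrow> nat set \<Rightarrow> rat set" where
  "exp_puiseux r N = gen_monoid {r ^ k | k. k \<in> N}"

definition rat_num :: "rat \<Rightarrow> int" where
  "rat_num r = fst (quotient_of r)"

definition units_of_monoid :: "rat set \<Rightarrow> rat set" where
  "units_of_monoid M = {u \<in> M. \<exists>v\<in>M. u + v = 0}"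

definition atoms :: "rat set \<Rightarrow> rat set" where
  "atoms M = {a \<in> M. a \<notin> units_of_monoid M \<and>
      (\<forall>x\<in>M. \<forall>y\<in>M. a = x + y \<longrightarrow> x \<in> units_of_monoid M \<or> y \<in> units_of_monoid M)}"

definition lengths :: "rat set \<Rightarrow> rat \<Rightarrow> nat set" where
  "lengths M x = {size F | F. set_mset F \<subseteq> atoms M \<and> sum_mset F = x}"

definition system_of_lengths :: "rat set \<Rightarrow> nat set set" where
  "system_of_lengths M = {lengths M x | x. x \<in> M}"

end

theory Submission
  imports Defs
begin

lemma pow_sum_dvd:
  fixes p q :: int and f :: "'a \<Rightarrow> nat"
  assumes q: "q \<noteq> 0" and D: "\<forall>x\<in>#D. 1 \<le> f x \<and> f x \<le> K"
  shows "\<exists>z::int. (of_int q)^K * (\<Sum>x\<in>#D. (of_int p / of_int q :: rat)^(f x)) = of_int p * of_int z"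
  using D
proof (induction D)
  case empty then show ?case by (auto intro: exI[of _ 0])
next
  case (add x D)
  then obtain z where z: "(of_int q)^K * (\<Sum>x\<in>#D. (of_int p / of_int q :: rat)^(f x)) = of_int p * of_int z" by auto
  have fx: "1 \<le> f x" "f x \<le> K" using add.prems by auto
  have "(of_int q :: rat)^K * (of_int p / of_int q)^(f x) = of_int p * of_int (p^(f x - 1) * q^(K - f x))"
  proof -
    have e1: "(of_int q :: rat)^K = of_int q ^ f x * of_int q ^ (K - f x)" using fx by (simp add: power_add[symmetric])
    have e2: "(of_int p :: rat)^(f x) = of_int p * of_int p ^ (f x - 1)" using fx
      by (metis Suc_diff_le diff_Suc_1 power_Suc)
    have qn: "(of_int q :: rat) ^ f x \<noteq> 0" using q by simp
    show ?thesis unfolding e1 power_divide using e2 qn q by (simp add: field_simps)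
  qed
  then show ?case using z by (auto simp: algebra_simps intro!: exI[of _ "z + p^(f x - 1) * q^(K - f x)"])
qed

lemma core_step:
  fixes p q :: int and f1 f2 :: "'a \<Rightarrow> nat" and e :: nat
  assumes q: "q > 0" and p: "p \<ge> 2" and cop: "coprime p q"
    and D1: "\<forall>x\<in>#D1. 1 \<le> f1 x" and D2: "\<forall>x\<in>#D2. 1 \<le> f2 x"
    and eq: "of_nat e + (\<Sum>x\<in>#D1. (of_int p / of_int q :: rat)^(f1 x)) = 1 + (\<Sum>x\<in>#D2. (of_int p / of_int q :: rat)^(f2 x))"
  shows "p dvd (int e - 1)"
proof -
  define K where "K = Max (insert 0 (f1 ` set_mset D1 \<union> f2 ` set_mset D2))"
  have K1: "\<forall>x\<in>#D1. 1 \<le> f1 x \<and> f1 x \<le> K" using D1 unfolding K_def by (auto intro: Max_ge)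
  have K2: "\<forall>x\<in>#D2. 1 \<le> f2 x \<and> f2 x \<le> K" using D2 unfolding K_def by (auto intro: Max_ge)
  obtain z1 where z1: "(of_int q)^K * (\<Sum>x\<in>#D1. (of_int p / of_int q :: rat)^(f1 x)) = of_int p * of_int z1"
    using pow_sum_dvd[OF _ K1, of q p] q by auto
  obtain z2 where z2: "(of_int q)^K * (\<Sum>x\<in>#D2. (of_int p / of_int q :: rat)^(f2 x)) = of_int p * of_int z2"
    using pow_sum_dvd[OF _ K2, of q p] q by auto
  have "(of_int q :: rat)^K * (of_nat e + (\<Sum>x\<in>#D1. (of_int p / of_int q :: rat)^(f1 x)))
      = (of_int q)^K * (1 + (\<Sum>x\<in>#D2. (of_int p / of_int q :: rat)^(f2 x)))" using eq by simp
  hence "(of_int q :: rat)^K * of_nat e + of_int p * of_int z1 = (of_int q)^K + of_int p * of_int z2"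
    using z1 z2 by (simp add: algebra_simps)
  hence "rat_of_int (q^K * int e + p * z1) = rat_of_int (q^K + p * z2)" by simp
  hence "q^K * int e + p * z1 = q^K + p * z2" using of_int_eq_iff by blast
  hence "(int e - 1) * q^K = p * (z2 - z1)" by (simp add: algebra_simps)
  hence "p dvd (int e - 1) * q^K" by simp
  moreover have "coprime p (q^K)" using cop by simp
  ultimately show ?thesis using coprime_dvd_mult_left_iff by blast
qed

lemma core_step2:
  fixes p q :: int and f1 f2 :: "'a \<Rightarrow> nat" and e :: nat
  assumes q: "q > 0" and p: "p \<ge> 2" and cop: "coprime p q"
    and D1: "\<forall>x\<in>#D1. 1 \<le> f1 x" and D2: "\<forall>x\<in>#D2. 1 \<le> f2 x" and e: "e \<le> 1"
    and eq: "of_nat e + (\<Sum>x\<in>#D1. (of_int p / of_int q :: rat)^(f1 x)) = 1 + (\<Sum>x\<in>#D2. (of_int p / of_int q :: rat)^(f2 x))"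
  shows "e = 1"
proof (rule ccontr)
  assume "e \<noteq> 1" hence "e = 0" using e by simp
  with core_step[OF q p cop D1 D2 eq] have "p dvd 1" by simp
  with p show False by (auto dest: zdvd_imp_le)
qed

lemma msum_nonneg: "set_mset F \<subseteq> {x::rat. x > 0} \<Longrightarrow> sum_mset F \<ge> 0"
  by (induction F) auto

lemma msum_pos: "set_mset F \<subseteq> {x::rat. x > 0} \<Longrightarrow> F \<noteq> {#} \<Longrightarrow> sum_mset F > 0"
proof (induction F)
  case empty then show ?case by simp
next
  case (add x F) then show ?case using msum_nonneg[of F] by (cases "F = {#}") auto
qed

lemma msum_gt_elem:
  assumes "set_mset F \<subseteq> {x::rat. x > 0}" "y \<in># F" "size F \<ge> 2"
  shows "y < sum_mset F"
proof -
  have F: "F = add_mset y (F - {#y#})" using assms(2) by simp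
  have "F - {#y#} \<noteq> {#}" using assms(3) F by (metis One_nat_def numeral_2_eq_2 not_less_eq_eq size_add_mset size_empty le_zero_eq)
  moreover have "set_mset (F - {#y#}) \<subseteq> {x::rat. x > 0}" using assms(1) by (meson in_diffD subset_iff)
  ultimately have "sum_mset (F - {#y#}) > 0" using msum_pos by blast
  moreover have "sum_mset F = y + sum_mset (F - {#y#})" by (subst F) simp
  ultimately show ?thesis by simp
qed

lemma msum_ge_elem:
  assumes "set_mset F \<subseteq> {x::rat. x > 0}" "y \<in># F"
  shows "y \<le> sum_mset F"
proof -
  have F: "F = add_mset y (F - {#y#})" using assms(2) by simp
  have "set_mset (F - {#y#}) \<subseteq> {x::rat. x > 0}" using assms(1) by (meson in_diffD subset_iff)
  hence "sum_mset (F - {#y#}) \<ge> 0" using msum_nonneg by blast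
  moreover have "sum_mset F = y + sum_mset (F - {#y#})" by (subst F) simp
  ultimately show ?thesis by simp
qed

lemma mset_image_ex: "set_mset F \<subseteq> f ` A \<Longrightarrow> \<exists>E. set_mset E \<subseteq> A \<and> F = image_mset f E"
proof (induction F)
  case empty then show ?case by (auto intro: exI[of _ "{#}"])
next
  case (add x F)
  then obtain E where E: "set_mset E \<subseteq> A" "F = image_mset f E" by auto
  obtain a where "a \<in> A" "x = f a" using add.prems by auto
  then show ?case using E by (auto intro!: exI[of _ "add_mset a E"])
qed

lemma gm_nonneg: "G \<subseteq> {x::rat. x > 0} \<Longrightarrow> x \<in> gen_monoid G \<Longrightarrow> x \<ge> 0"
  unfolding gen_monoid_def using msum_nonneg by blast

lemma gm_add: assumes "x \<in> gen_monoid G" "y \<in> gen_monoid G" shows "x + y \<in> gen_monoid G"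
proof -
  obtain F1 where "set_mset F1 \<subseteq> G" "x = sum_mset F1" using \<open>x \<in> gen_monoid G\<close> unfolding gen_monoid_def by auto
  moreover obtain F2 where "set_mset F2 \<subseteq> G" "y = sum_mset F2" using \<open>y \<in> gen_monoid G\<close> unfolding gen_monoid_def by auto
  ultimately show ?thesis unfolding gen_monoid_def by (auto intro!: exI[of _ "F1 + F2"])
qed

lemma gm_zero: "0 \<in> gen_monoid G"
  unfolding gen_monoid_def by (auto intro!: exI[of _ "{#}"])

lemma gm_gen: "a \<in> G \<Longrightarrow> a \<in> gen_monoid G"
  unfolding gen_monoid_def by (auto intro!: exI[of _ "{#a#}"])

lemma units_gm: "G \<subseteq> {x::rat. x > 0} \<Longrightarrow> units_of_monoid (gen_monoid G) = {0}"
  unfolding units_of_monoid_def using gm_nonneg gm_zero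
  by (auto, metis add.commute add_nonneg_eq_0_iff)

lemma atoms_sub:
  assumes G: "G \<subseteq> {x::rat. x > 0}"
  shows "atoms (gen_monoid G) \<subseteq> G"
proof
  fix a assume a: "a \<in> atoms (gen_monoid G)"
  hence am: "a \<in> gen_monoid G" and an: "a \<noteq> 0" and irr: "\<forall>x\<in>gen_monoid G. \<forall>y\<in>gen_monoid G. a = x + y \<longrightarrow> x = 0 \<or> y = 0"
    unfolding atoms_def units_gm[OF G] by auto
  obtain F where F: "set_mset F \<subseteq> G" "a = sum_mset F" using am unfolding gen_monoid_def by auto
  have "F \<noteq> {#}" using F an by auto
  then obtain y where y: "y \<in># F" by blast
  define F' where "F' = F - {#y#}"
  have FF: "F = add_mset y F'" using y F'_def by simp
  have yG: "y \<in> G" using y F by auto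
  show "a \<in> G"
  proof (cases "F' = {#}")
    case True then show ?thesis using FF F yG by simp
  next
    case False
    have F'G: "set_mset F' \<subseteq> G" using F FF by auto
    have "sum_mset F' > 0" using msum_pos[OF _ False] F'G G by blast
    moreover have "y > 0" using yG G by auto
    moreover have "sum_mset F' \<in> gen_monoid G" using F'G unfolding gen_monoid_def by auto
    moreover have "a = y + sum_mset F'" using F FF by simp
    ultimately show ?thesis using irr gm_gen[OF yG] by force
  qed
qed

lemma atom_intro:
  assumes G: "G \<subseteq> {x::rat. x > 0}" and aG: "a \<in> G"
    and irr: "\<forall>F. set_mset F \<subseteq> G \<and> size F \<ge> 2 \<longrightarrow> sum_mset F \<noteq> a"
  shows "a \<in> atoms (gen_monoid G)"
proof -
  have a0: "a > 0" using aG G by auto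
  have "\<forall>x\<in>gen_monoid G. \<forall>y\<in>gen_monoid G. a = x + y \<longrightarrow> x = 0 \<or> y = 0"
  proof (intro ballI impI, rule ccontr)
    fix x y assume xm: "x \<in> gen_monoid G" and ym: "y \<in> gen_monoid G" and e: "a = x + y" and nz: "\<not> (x = 0 \<or> y = 0)"
    obtain F1 where F1: "set_mset F1 \<subseteq> G" "x = sum_mset F1" using xm unfolding gen_monoid_def by auto
    obtain F2 where F2: "set_mset F2 \<subseteq> G" "y = sum_mset F2" using ym unfolding gen_monoid_def by auto
    have "F1 \<noteq> {#}" "F2 \<noteq> {#}" using nz F1 F2 by auto
    hence "size (F1 + F2) \<ge> 2" by (simp add: Suc_leI nonempty_has_size numeral_2_eq_2)
    moreover have "set_mset (F1 + F2) \<subseteq> G" using F1 F2 by auto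
    moreover have "sum_mset (F1 + F2) = a" using F1 F2 e by simp
    ultimately show False using irr by blast
  qed
  then show ?thesis unfolding atoms_def units_gm[OF G] using gm_gen[OF aG] a0 by auto
qed

lemma dvd_pow_diff: "(m::int) dvd (x - y) \<Longrightarrow> m dvd x^k - y^k"
proof (induction k)
  case 0 then show ?case by simp
next
  case (Suc k)
  have "x^Suc k - y^Suc k = x * (x^k - y^k) + y^k * (x - y)" by (simp add: algebra_simps)
  then show ?case using Suc by simp
qed

lemma rat_setup:
  assumes "r > 0" "r \<notin> \<nat>" "rat_num r > 1"
  obtains a b :: int where "r = of_int a / of_int b" "a \<ge> 2" "b \<ge> 2" "coprime a b"
proof -
  obtain a b where q: "quotient_of r = (a, b)" by (cases "quotient_of r")
  have r: "r = of_int a / of_int b" using quotient_of_div[OF q] .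
  have a: "a \<ge> 2" using assms(3) q unfolding rat_num_def by simp
  have b0: "b > 0" using quotient_of_denom_pos[OF q] .
  have cop: "coprime a b" using quotient_of_coprime[OF q] .
  have "b \<noteq> 1"
  proof
    assume "b = 1"
    hence "r = of_nat (nat a)" using r a by simp
    thus False using assms(2) by (simp add: Nats_def)
  qed
  hence "b \<ge> 2" using b0 by simp
  then show ?thesis using that r a cop by blast
qed

lemma pow_shift_down: "(r::rat) \<noteq> 0 \<Longrightarrow> j \<le> k \<Longrightarrow> r^j = r^k * (1/r)^(k-j)"
proof -
  assume r: "r \<noteq> 0" and jk: "j \<le> k"
  have "r^k = r^j * r^(k-j)" using jk by (simp add: power_add[symmetric])
  then show ?thesis using r by (simp add: power_one_over field_simps)
qed

lemma pow_shift_up: "j \<ge> k \<Longrightarrow> (r::rat)^j = r^k * r^(j-k)"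
  by (simp add: power_add[symmetric])

lemma sum_shift:
  assumes "\<forall>x\<in>#E. (f x :: rat) = c * g x"
  shows "(\<Sum>x\<in>#E. f x) = c * (\<Sum>x\<in>#E. g x)"
proof -
  have "(\<Sum>x\<in>#E. f x) = (\<Sum>x\<in>#E. c * g x)" using assms by (metis image_mset_cong)
  also have "\<dots> = c * (\<Sum>x\<in>#E. g x)" by (simp add: sum_mset_distrib_left)
  finally show ?thesis .
qed

lemma irr_sum:
  fixes a b :: int and r :: rat
  assumes r: "r = of_int a / of_int b" and a: "a \<ge> 2" and b: "b \<ge> 2" and cop: "coprime a b"
    and E: "size E \<ge> 2"
  shows "(\<Sum>j\<in>#E. r^j) \<noteq> r^k"
proof
  assume eq: "(\<Sum>j\<in>#E. r^j) = r^k"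
  have r0: "r > 0" using r a b by simp
  have "a \<noteq> b"
  proof
    assume "a = b"
    hence "a dvd 1" using cop by simp
    thus False using a zdvd_imp_le by fastforce
  qed
  hence r1: "r \<noteq> 1" using r b by (simp add: divide_eq_1_iff)
  let ?F = "image_mset (\<lambda>j. r^j) E"
  have Fpos: "set_mset ?F \<subseteq> {x. x > 0}" using r0 by auto
  have lt: "\<forall>j\<in>#E. r^j < r^k"
    using msum_gt_elem[OF Fpos, of ] E eq by (metis image_eqI set_image_mset size_image_mset)
  show False
  proof (cases "r > 1")
    case True
    have jk: "\<forall>j\<in>#E. j < k" using lt True by (simp add: power_strict_increasing_iff)
    have c: "1 / r = of_int b / of_int a" using r by simp
    have "(\<Sum>j\<in>#E. r^j) = r^k * (\<Sum>j\<in>#E. (1/r)^(k-j))"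
      by (rule sum_shift) (use jk r0 pow_shift_down in auto)
    hence "(\<Sum>j\<in>#E. (of_int b / of_int a :: rat)^(k-j)) = 1" using eq r0 c by simp
    hence "of_nat 0 + (\<Sum>j\<in>#E. (of_int b / of_int a :: rat)^(k-j)) = 1 + (\<Sum>j\<in>#{#}. (of_int b / of_int a :: rat)^(k-j))" by simp
    from core_step2[OF _ _ _ _ _ _ this] jk a b cop show False by (force simp add: coprime_commute)
  next
    case False
    hence rl: "r < 1" using r1 by simp
    have jk: "\<forall>j\<in>#E. j > k" using lt rl r0 by (simp add: power_strict_decreasing_iff)
    have "(\<Sum>j\<in>#E. r^j) = r^k * (\<Sum>j\<in>#E. r^(j-k))"
      by (rule sum_shift) (use jk pow_shift_up in auto)
    hence "(\<Sum>j\<in>#E. (of_int a / of_int b :: rat)^(j-k)) = 1" using eq r0 r a b by simp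
    hence "of_nat 0 + (\<Sum>j\<in>#E. (of_int a / of_int b :: rat)^(j-k)) = 1 + (\<Sum>j\<in>#{#}. (of_int a / of_int b :: rat)^(j-k))" by simp
    from core_step2[OF _ _ _ _ _ _ this] jk a b cop show False by force
  qed
qed

lemma atoms_eq:
  fixes a b :: int and r :: rat
  assumes r: "r = of_int a / of_int b" and a: "a \<ge> 2" and b: "b \<ge> 2" and cop: "coprime a b"
  shows "atoms (exp_puiseux r N) = (\<lambda>k. r^k) ` N"
proof -
  have r0: "r > 0" using r a b by simp
  have G: "{r ^ k | k. k \<in> N} = (\<lambda>k. r^k) ` N" by auto
  have Gp: "(\<lambda>k. r^k) ` N \<subseteq> {x. x > 0}" using r0 by auto
  show ?thesis unfolding exp_puiseux_def G
  proof
    show "atoms (gen_monoid ((\<lambda>k. r^k) ` N)) \<subseteq> (\<lambda>k. r^k) ` N" using atoms_sub[OF Gp] .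
    show "(\<lambda>k. r^k) ` N \<subseteq> atoms (gen_monoid ((\<lambda>k. r^k) ` N))"
    proof
      fix x assume x: "x \<in> (\<lambda>k. r^k) ` N"
      then obtain k where k: "x = r^k" by auto
      show "x \<in> atoms (gen_monoid ((\<lambda>k. r^k) ` N))"
      proof (rule atom_intro[OF Gp x], intro allI impI)
        fix F assume F: "set_mset F \<subseteq> (\<lambda>k. r^k) ` N \<and> 2 \<le> size F"
        then obtain E where E: "set_mset E \<subseteq> N" "F = image_mset (\<lambda>k. r^k) E" using mset_image_ex by blast
        have "size E \<ge> 2" using F E by simp
        from irr_sum[OF r a b cop this, of k] show "sum_mset F \<noteq> x" using E k by simp
      qed
    qed
  qed
qed

definition uniq :: "rat \<Rightarrow> nat multiset \<Rightarrow> bool" where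
  "uniq r X \<longleftrightarrow> (\<forall>E. (\<Sum>k\<in>#E. r^k) = (\<Sum>k\<in>#X. r^k) \<longrightarrow> size E = size X)"

lemma split_M:
  "(\<Sum>k\<in>#E. (r::rat)^k) = of_nat (count E M) * r^M + (\<Sum>k\<in>#filter_mset (\<lambda>k. k \<noteq> M) E. r^k)"
  "size E = count E M + size (filter_mset (\<lambda>k. k \<noteq> M) E)"
proof -
  have E: "E = replicate_mset (count E M) M + filter_mset (\<lambda>k. k \<noteq> M) E"
    using multiset_partition[of E "\<lambda>k. k = M"] filter_eq_replicate_mset[of M E]
    by (metis (mono_tags, lifting) filter_mset_cong)
  show "(\<Sum>k\<in>#E. (r::rat)^k) = of_nat (count E M) * r^M + (\<Sum>k\<in>#filter_mset (\<lambda>k. k \<noteq> M) E. r^k)"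
    by (subst E) simp
  show "size E = count E M + size (filter_mset (\<lambda>k. k \<noteq> M) E)"
    by (subst E) simp
qed

lemma pow_le_sum:
  assumes "(r::rat) > 0" "k \<in># E"
  shows "r^k \<le> (\<Sum>k\<in>#E. r^k)"
proof -
  have "(\<lambda>k. r^k) ` set_mset E \<subseteq> {x. 0<x}" using assms by auto
  then show ?thesis using msum_ge_elem[of "image_mset (\<lambda>k. r^k) E" "r^k"] assms by auto
qed

lemma sum_nonneg_pow: "(r::rat) > 0 \<Longrightarrow> (\<Sum>k\<in>#E. r^k) \<ge> 0"
proof -
  assume "r > 0"
  hence "(\<lambda>k. r^k) ` set_mset E \<subseteq> {x. 0<x}" by auto
  then show ?thesis using msum_nonneg[of "image_mset (\<lambda>k. r^k) E"] by auto
qed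

lemma ext_big:
  fixes a b :: int and r :: rat
  assumes r: "r = of_int a / of_int b" and a: "a \<ge> 2" and b: "b \<ge> 2" and cop: "coprime a b"
    and r1: "r > 1" and U: "uniq r X"
    and S1: "(\<Sum>k\<in>#X. r^k) < r^M" and S2: "(\<Sum>k\<in>#X. r^k) < r^M * (r - 1)"
  shows "uniq r (add_mset M X)"
  unfolding uniq_def
proof (intro allI impI)
  fix E assume eq0: "(\<Sum>k\<in>#E. r^k) = (\<Sum>k\<in>#add_mset M X. r^k)"
  define S where "S = (\<Sum>k\<in>#X. r^k)"
  have r0: "r > 0" using r1 by simp
  have eq: "(\<Sum>k\<in>#E. r^k) = r^M + S" using eq0 unfolding S_def by simp
  have kM: "\<forall>k\<in>#E. k < M" if "False" using that by simp
  have kle: "\<forall>k\<in>#E. k \<le> M"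
  proof
    fix k assume k: "k \<in># E"
    have "r^k \<le> r^M + S" using pow_le_sum[OF r0 k] eq by simp
    also have "\<dots> < r^(Suc M)" using S2 unfolding S_def by (simp add: algebra_simps)
    finally have "k < Suc M" using power_strict_increasing_iff[OF r1] by blast
    thus "k \<le> M" by simp
  qed
  define e where "e = count E M"
  define E2 where "E2 = filter_mset (\<lambda>k. k \<noteq> M) E"
  have sE: "(\<Sum>k\<in>#E. r^k) = of_nat e * r^M + (\<Sum>k\<in>#E2. r^k)" and zE: "size E = e + size E2"
    using split_M(1)[of r E M] split_M(2)[of E M] unfolding e_def E2_def by auto
  have "of_nat e * r^M < 2 * r^M"
    using sE eq sum_nonneg_pow[OF r0, of E2] S1 unfolding S_def by simp
  hence e2: "e \<le> 1" using r0 by simp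
  have E2M: "\<forall>k\<in>#E2. k < M" using kle unfolding E2_def by auto
  have XM: "\<forall>j\<in>#X. j < M"
  proof
    fix j assume "j \<in># X"
    hence "r^j < r^M" using pow_le_sum[OF r0, of j X] S1 by simp
    thus "j < M" using r1 by (simp add: power_strict_increasing_iff)
  qed
  have c: "1 / r = of_int b / of_int a" using r by simp
  have A: "(\<Sum>k\<in>#E2. r^k) = r^M * (\<Sum>k\<in>#E2. (1/r)^(M-k))"
    by (rule sum_shift) (use E2M r0 pow_shift_down in auto)
  have B: "S = r^M * (\<Sum>k\<in>#X. (1/r)^(M-k))" unfolding S_def
    by (rule sum_shift) (use XM r0 pow_shift_down in auto)
  have "r^M * (of_nat e + (\<Sum>k\<in>#E2. (1/r)^(M-k))) = r^M * (1 + (\<Sum>k\<in>#X. (1/r)^(M-k)))"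
    using sE eq A B by (simp add: algebra_simps)
  hence "of_nat e + (\<Sum>k\<in>#E2. (of_int b / of_int a :: rat)^(M-k)) = 1 + (\<Sum>k\<in>#X. (of_int b / of_int a :: rat)^(M-k))"
    using r0 c by simp
  from core_step2[OF _ _ _ _ _ e2 this] have e1: "e = 1" using a b cop E2M XM by (force simp: coprime_commute)
  hence "(\<Sum>k\<in>#E2. r^k) = (\<Sum>k\<in>#X. r^k)" using sE eq unfolding S_def by simp
  hence "size E2 = size X" using U unfolding uniq_def by blast
  thus "size E = size (add_mset M X)" using zE e1 by simp
qed

lemma ext_small:
  fixes a b :: int and r :: rat
  assumes r: "r = of_int a / of_int b" and a: "a \<ge> 2" and b: "b \<ge> 2" and cop: "coprime a b"
    and r1: "r < 1" and U: "uniq r X" and XM: "\<forall>j\<in>#X. j > M"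
    and S1: "(\<Sum>k\<in>#X. r^k) < r^M" and S2: "(\<Sum>k\<in>#X. r^k) * r < r^M * (1 - r)"
  shows "uniq r (add_mset M X)"
  unfolding uniq_def
proof (intro allI impI)
  fix E assume eq0: "(\<Sum>k\<in>#E. r^k) = (\<Sum>k\<in>#add_mset M X. r^k)"
  define S where "S = (\<Sum>k\<in>#X. r^k)"
  have r0: "r > 0" using r a b by simp
  have eq: "(\<Sum>k\<in>#E. r^k) = r^M + S" using eq0 unfolding S_def by simp
  have kle: "\<forall>k\<in>#E. M \<le> k"
  proof (rule ballI, rule ccontr)
    fix k assume k: "k \<in># E" and nk: "\<not> M \<le> k"
    have "r^M \<le> r^(Suc k)" using nk r0 r1 by (intro power_decreasing) auto
    also have "\<dots> = r^k * r" by simp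
    also have "\<dots> \<le> (r^M + S) * r" using pow_le_sum[OF r0 k] eq r0 by (simp add: mult_right_mono)
    also have "\<dots> < r^M" using S2 unfolding S_def by (simp add: algebra_simps)
    finally show False by simp
  qed
  define e where "e = count E M"
  define E2 where "E2 = filter_mset (\<lambda>k. k \<noteq> M) E"
  have sE: "(\<Sum>k\<in>#E. r^k) = of_nat e * r^M + (\<Sum>k\<in>#E2. r^k)" and zE: "size E = e + size E2"
    using split_M(1)[of r E M] split_M(2)[of E M] unfolding e_def E2_def by auto
  have "of_nat e * r^M < 2 * r^M"
    using sE eq sum_nonneg_pow[OF r0, of E2] S1 unfolding S_def by simp
  hence e2: "e \<le> 1" using r0 by simp
  have E2M: "\<forall>k\<in>#E2. k > M" using kle unfolding E2_def by auto
  have A: "(\<Sum>k\<in>#E2. r^k) = r^M * (\<Sum>k\<in>#E2. r^(k-M))"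
    by (rule sum_shift) (use E2M pow_shift_up in auto)
  have B: "S = r^M * (\<Sum>k\<in>#X. r^(k-M))" unfolding S_def
    by (rule sum_shift) (use XM pow_shift_up in auto)
  have "r^M * (of_nat e + (\<Sum>k\<in>#E2. r^(k-M))) = r^M * (1 + (\<Sum>k\<in>#X. r^(k-M)))"
    using sE eq A B by (simp add: algebra_simps)
  hence "of_nat e + (\<Sum>k\<in>#E2. (of_int a / of_int b :: rat)^(k-M)) = 1 + (\<Sum>k\<in>#X. (of_int a / of_int b :: rat)^(k-M))"
    using r0 r a b by simp
  from core_step2[OF _ _ _ _ _ e2 this] have e1: "e = 1" using a b cop E2M XM by force
  hence "(\<Sum>k\<in>#E2. r^k) = (\<Sum>k\<in>#X. r^k)" using sE eq unfolding S_def by simp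
  hence "size E2 = size X" using U unfolding uniq_def by blast
  thus "size E = size (add_mset M X)" using zE e1 by simp
qed

lemma rat_arch_pow: "1 < (r::rat) \<Longrightarrow> \<exists>n. y < r^n"
proof -
  assume r: "1 < r"
  have "1 < (of_rat r :: real)" using r by (simp add: of_rat_less[symmetric] del: of_rat_less)
  then obtain n where "(of_rat y :: real) < (of_rat r)^n" using real_arch_pow by blast
  hence "(of_rat y :: real) < of_rat (r^n)" by (simp add: of_rat_power)
  thus ?thesis using of_rat_less by blast
qed

lemma nm_bound: "numerical_monoid N \<Longrightarrow> \<exists>B. \<forall>m\<ge>B. m \<in> N"
proof -
  assume "numerical_monoid N"
  hence "finite (UNIV - N)" unfolding numerical_monoid_def by simp
  then obtain B where "\<forall>n\<in>UNIV - N. n < B" using finite_nat_set_iff_bounded by blast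
  thus ?thesis by (metis DiffI UNIV_I not_le)
qed

lemma sum_le_size: "(\<forall>x\<in>#X. (f x::rat) \<le> c) \<Longrightarrow> (\<Sum>x\<in>#X. f x) \<le> of_nat (size X) * c"
  by (induction X) (auto simp: algebra_simps)

lemma sum_pos_pow: "(r::rat) > 0 \<Longrightarrow> E \<noteq> {#} \<Longrightarrow> (\<Sum>k\<in>#E. r^k) > 0"
proof -
  assume "r > 0" "E \<noteq> {#}"
  moreover hence "(\<lambda>k. r^k) ` set_mset E \<subseteq> {x. 0<x}" by auto
  ultimately show ?thesis using msum_pos[of "image_mset (\<lambda>k. r^k) E"] by auto
qed

lemma exists_big:
  fixes a b :: int and r :: rat
  assumes r: "r = of_int a / of_int b" and a: "a \<ge> 2" and b: "b \<ge> 2" and cop: "coprime a b"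
    and r1: "r > 1" and N: "numerical_monoid N"
  shows "\<exists>X. set_mset X \<subseteq> N \<and> size X = n \<and> uniq r X"
proof (induction n)
  case 0
  have "uniq r {#}" unfolding uniq_def
  proof (intro allI impI)
    fix E assume "(\<Sum>k\<in>#E. r^k) = (\<Sum>k\<in>#{#}. r^k)"
    moreover have "(\<Sum>k\<in>#E. r^k) > 0" if "E \<noteq> {#}"
      using sum_pos_pow[of r E] r1 that by auto
    ultimately show "size E = size {#}" by fastforce
  qed
  then show ?case by (auto intro!: exI[of _ "{#}"])
next
  case (Suc n)
  then obtain X where X: "set_mset X \<subseteq> N" "size X = n" "uniq r X" by blast
  obtain B where B: "\<forall>m\<ge>B. m \<in> N" using nm_bound[OF N] by blast
  define t where "t = min 1 (r - 1)"
  have t0: "t > 0" using r1 unfolding t_def by simp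
  define S where "S = (\<Sum>k\<in>#X. r^k)"
  obtain s where s: "S / t < r^s" using rat_arch_pow[OF r1] by blast
  have "r^s \<le> r^(B+s)" using r1 by (simp add: power_increasing)
  hence "t * r^s \<le> t * r^(B+s)" using t0 by (simp add: mult_left_mono)
  moreover have "S < t * r^s" using s t0 by (simp add: divide_less_eq mult.commute)
  ultimately have "S < t * r^(B+s)" by linarith
  moreover have "t * r^(B+s) \<le> 1 * r^(B+s)" using r1 unfolding t_def by (intro mult_right_mono) auto
  moreover have "t * r^(B+s) \<le> (r - 1) * r^(B+s)" using r1 unfolding t_def by (intro mult_right_mono) auto
  ultimately have S1: "S < r^(B+s)" and S2: "S < r^(B+s) * (r - 1)" by (auto simp: mult.commute)
  have "uniq r (add_mset (B+s) X)" using ext_big[OF r a b cop r1 X(3)] S1 S2 unfolding S_def by blast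
  moreover have "B + s \<in> N" using B by simp
  ultimately show ?case using X by (auto intro!: exI[of _ "add_mset (B+s) X"])
qed

lemma exists_small:
  fixes a b :: int and r :: rat
  assumes r: "r = of_int a / of_int b" and a: "a \<ge> 2" and b: "b \<ge> 2" and cop: "coprime a b"
    and r1: "r < 1" and N: "numerical_monoid N"
  shows "\<exists>X. set_mset X \<subseteq> N \<and> size X = n \<and> (\<forall>j\<in>#X. L \<le> j) \<and> uniq r X"
proof (induction n arbitrary: L)
  case 0
  have r0: "r > 0" using r a b by simp
  have "uniq r {#}" unfolding uniq_def
  proof (intro allI impI)
    fix E assume "(\<Sum>k\<in>#E. r^k) = (\<Sum>k\<in>#{#}. r^k)"
    moreover have "(\<Sum>k\<in>#E. r^k) > 0" if "E \<noteq> {#}"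
      using sum_pos_pow[of r E] r0 that by auto
    ultimately show "size E = size {#}" by fastforce
  qed
  then show ?case by (auto intro!: exI[of _ "{#}"])
next
  case (Suc n)
  have r0: "r > 0" using r a b by simp
  obtain B where B: "\<forall>m\<ge>B. m \<in> N" using nm_bound[OF N] by blast
  define M where "M = max L B"
  have MN: "M \<in> N" using B unfolding M_def by simp
  have ir: "1 < 1 / r" using r0 r1 by simp
  obtain s where s: "of_nat n / ((1 - r) * r^M) < (1/r)^s" using rat_arch_pow[OF ir] by blast
  have pos: "(1 - r) * r^M > 0" using r0 r1 by simp
  have "of_nat n < (1/r)^s * ((1 - r) * r^M)" using s pos by (simp add: divide_less_eq)
  hence "of_nat n * r^s < (1/r)^s * ((1 - r) * r^M) * r^s" using r0 by simp
  also have "\<dots> = (1 - r) * r^M" using r0 by (simp add: power_one_over)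
  finally have ns: "of_nat n * r^s < (1 - r) * r^M" .
  define L' where "L' = M + 1 + s"
  obtain X where X: "set_mset X \<subseteq> N" "size X = n" "\<forall>j\<in>#X. L' \<le> j" "uniq r X" using Suc by blast
  define S where "S = (\<Sum>k\<in>#X. r^k)"
  have "\<forall>j\<in>#X. r^j \<le> r^s" using X(3) r0 r1 unfolding L'_def by (auto intro!: power_decreasing)
  hence "S \<le> of_nat n * r^s" using sum_le_size[of X "\<lambda>k. r^k" "r^s"] X(2) unfolding S_def by simp
  hence SS: "S < (1 - r) * r^M" using ns by simp
  have S0: "S \<ge> 0" using sum_nonneg_pow[OF r0] unfolding S_def by simp
  have "(1 - r) * r^M \<le> 1 * r^M" by (rule mult_right_mono) (use r0 in auto)
  hence S1: "S < r^M" using SS by simp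
  have "S * r \<le> S * 1" by (rule mult_left_mono) (use S0 r1 in auto)
  hence S2: "S * r < r^M * (1 - r)" using SS by (simp add: mult.commute)
  have XM: "\<forall>j\<in>#X. j > M" using X(3) unfolding L'_def by auto
  have "uniq r (add_mset M X)" using ext_small[OF r a b cop r1 X(4) XM] S1 S2 unfolding S_def by blast
  moreover have "\<forall>j\<in>#add_mset M X. L \<le> j" using X(3) unfolding L'_def M_def by auto
  ultimately show ?case using X MN by (auto intro!: exI[of _ "add_mset M X"])
qed

lemma exists_uniq:
  fixes a b :: int and r :: rat
  assumes r: "r = of_int a / of_int b" and a: "a \<ge> 2" and b: "b \<ge> 2" and cop: "coprime a b"
    and N: "numerical_monoid N"
  shows "\<exists>X. set_mset X \<subseteq> N \<and> size X = n \<and> uniq r X"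
proof (cases "r > 1")
  case True then show ?thesis using exists_big[OF r a b cop _ N] by blast
next
  case False
  have "a \<noteq> b"
  proof
    assume "a = b"
    hence "a dvd 1" using cop by simp
    thus False using a zdvd_imp_le by fastforce
  qed
  hence "r \<noteq> 1" using r b by (simp add: divide_eq_1_iff)
  hence "r < 1" using False by simp
  then show ?thesis using exists_small[OF r a b cop _ N] by blast
qed

lemma sing_in:
  assumes N: "numerical_monoid N" and r0: "r > 0" and rn: "r \<notin> \<nat>" and rnum: "rat_num r > 1"
  shows "{n} \<in> system_of_lengths (exp_puiseux r N)"
proof -
  obtain a b where r: "r = of_int a / of_int b" and a: "a \<ge> 2" and b: "b \<ge> 2" and cop: "coprime a b"
    using rat_setup[OF r0 rn rnum] by blast
  have At: "atoms (exp_puiseux r N) = (\<lambda>k. r^k) ` N" using atoms_eq[OF r a b cop] .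
  obtain X where X: "set_mset X \<subseteq> N" "size X = n" "uniq r X" using exists_uniq[OF r a b cop N] by blast
  define x where "x = (\<Sum>k\<in>#X. r^k)"
  have sub: "set_mset (image_mset (\<lambda>k. r^k) X) \<subseteq> {r ^ k | k. k \<in> N}"
  proof
    fix y assume "y \<in> set_mset (image_mset (\<lambda>k. r^k) X)"
    then obtain k where "k \<in># X" "y = r^k" by auto
    hence "k \<in> N" "y = r^k" using X(1) by auto
    thus "y \<in> {r ^ k | k. k \<in> N}" by blast
  qed
  have xM: "x \<in> exp_puiseux r N" unfolding exp_puiseux_def gen_monoid_def x_def
    by (intro CollectI exI[of _ "image_mset (\<lambda>k. r^k) X"] conjI sub) (simp add: x_def)
  have "lengths (exp_puiseux r N) x = {n}"
  proof
    show "lengths (exp_puiseux r N) x \<subseteq> {n}"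
    proof
      fix l assume "l \<in> lengths (exp_puiseux r N) x"
      then obtain F where F: "l = size F" "set_mset F \<subseteq> (\<lambda>k. r^k) ` N" "sum_mset F = x"
        unfolding lengths_def At by auto
      then obtain E where E: "set_mset E \<subseteq> N" "F = image_mset (\<lambda>k. r^k) E" using mset_image_ex by blast
      have "(\<Sum>k\<in>#E. r^k) = (\<Sum>k\<in>#X. r^k)" using F E unfolding x_def by simp
      hence "size E = size X" using X(3) unfolding uniq_def by blast
      thus "l \<in> {n}" using F E X by simp
    qed
    have F1: "size (image_mset (\<lambda>k. r^k) X) = n" using X(2) by simp
    have F2: "set_mset (image_mset (\<lambda>k. r^k) X) \<subseteq> (\<lambda>k. r^k) ` N" using X(1) by auto
    have F3: "sum_mset (image_mset (\<lambda>k. r^k) X) = x" unfolding x_def by simp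
    have "n \<in> lengths (exp_puiseux r N) x"
      unfolding lengths_def At by (intro CollectI exI[of _ "image_mset (\<lambda>k. r^k) X"] conjI F2) (simp_all add: F1 F3 X(2))
    then show "{n} \<subseteq> lengths (exp_puiseux r N) x" by simp
  qed
  then have "{n} = lengths (exp_puiseux r N) x" by simp
  then show ?thesis unfolding system_of_lengths_def using xM by (intro CollectI exI[of _ x] conjI) simp_all
qed

lemma cong_sum:
  fixes m :: int
  assumes m: "m \<ge> 1" and Ek: "\<forall>k\<in>#E. k \<le> K"
  shows "\<exists>z::int. (of_int (m+1))^K * (\<Sum>k\<in>#E. (of_int (2*m+1) / of_int (m+1) :: rat)^k)
            = of_int ((m+1)^K * int (size E) + m * z)"
  using Ek
proof (induction E)
  case empty then show ?case by (auto intro: exI[of _ 0])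
next
  case (add k E)
  then obtain z where z: "(of_int (m+1))^K * (\<Sum>k\<in>#E. (of_int (2*m+1) / of_int (m+1) :: rat)^k)
            = of_int ((m+1)^K * int (size E) + m * z)" by auto
  have kK: "k \<le> K" using add.prems by auto
  have "m dvd (2*m+1)^k - (m+1)^k" by (rule dvd_pow_diff) simp
  then obtain w where w: "(2*m+1)^k - (m+1)^k = m * w" by (auto elim: dvdE)
  have q0: "(of_int (m+1) :: rat) \<noteq> 0" using m by simp
  have e1: "(of_int (m+1) :: rat)^K = of_int (m+1) ^ k * of_int (m+1) ^ (K - k)" using kK by (simp add: power_add[symmetric])
  have "(of_int (m+1) :: rat)^K * (of_int (2*m+1) / of_int (m+1))^k = of_int ((2*m+1)^k * (m+1)^(K-k))"
    unfolding e1 power_divide using q0 by (simp add: field_simps)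
  also have "(2*m+1)^k * (m+1)^(K-k) = (m+1)^K + m * (w * (m+1)^(K-k))"
  proof -
    have "(2*m+1)^k * (m+1)^(K-k) = ((m+1)^k + m*w) * (m+1)^(K-k)" using w by (simp add: algebra_simps)
    also have "\<dots> = (m+1)^k * (m+1)^(K-k) + m * (w * (m+1)^(K-k))" by (simp add: algebra_simps)
    also have "(m+1)^k * (m+1)^(K-k) = (m+1)^K" using kK by (simp add: power_add[symmetric])
    finally show ?thesis .
  qed
  finally have t: "(of_int (m+1) :: rat)^K * (of_int (2*m+1) / of_int (m+1))^k = of_int ((m+1)^K + m * (w * (m+1)^(K-k)))" .
  have "(of_int (m+1))^K * (\<Sum>k\<in>#add_mset k E. (of_int (2*m+1) / of_int (m+1) :: rat)^k)
     = (of_int (m+1))^K * (of_int (2*m+1) / of_int (m+1) :: rat)^k + (of_int (m+1))^K * (\<Sum>k\<in>#E. (of_int (2*m+1) / of_int (m+1) :: rat)^k)"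
    by (simp add: distrib_left)
  also have "\<dots> = of_int ((m+1)^K + m * (w * (m+1)^(K-k))) + of_int ((m+1)^K * int (size E) + m * z)"
    by (simp only: t z)
  also have "\<dots> = of_int ((m+1)^K * int (size (add_mset k E)) + m * (z + w * (m+1)^(K-k)))"
    by (simp add: algebra_simps)
  finally show ?case by blast
qed

lemma cong_len:
  fixes m :: int
  assumes m: "m \<ge> 1"
    and eq: "(\<Sum>k\<in>#E1. (of_int (2*m+1) / of_int (m+1) :: rat)^k) = (\<Sum>k\<in>#E2. (of_int (2*m+1) / of_int (m+1) :: rat)^k)"
  shows "m dvd int (size E1) - int (size E2)"
proof -
  define K where "K = Max (insert 0 (set_mset E1 \<union> set_mset E2))"
  have K1: "\<forall>k\<in>#E1. k \<le> K" unfolding K_def by (auto intro: Max_ge)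
  have K2: "\<forall>k\<in>#E2. k \<le> K" unfolding K_def by (auto intro: Max_ge)
  obtain z1 where z1: "(of_int (m+1))^K * (\<Sum>k\<in>#E1. (of_int (2*m+1) / of_int (m+1) :: rat)^k)
            = of_int ((m+1)^K * int (size E1) + m * z1)" using cong_sum[OF m K1] by blast
  obtain z2 where z2: "(of_int (m+1))^K * (\<Sum>k\<in>#E2. (of_int (2*m+1) / of_int (m+1) :: rat)^k)
            = of_int ((m+1)^K * int (size E2) + m * z2)" using cong_sum[OF m K2] by blast
  have "rat_of_int ((m+1)^K * int (size E1) + m * z1) = rat_of_int ((m+1)^K * int (size E2) + m * z2)"
    using z1 z2 eq by simp
  hence "(m+1)^K * int (size E1) + m * z1 = (m+1)^K * int (size E2) + m * z2" using of_int_eq_iff by blast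
  hence "(int (size E1) - int (size E2)) * (m+1)^K = m * (z2 - z1)" by (simp add: algebra_simps)
  hence "m dvd (int (size E1) - int (size E2)) * (m+1)^K" by simp
  moreover have "coprime m ((m+1)^K)" by simp
  ultimately show ?thesis using coprime_dvd_mult_left_iff by blast
qed

lemma rm_props:
  fixes m :: int
  assumes m: "m \<ge> 1"
  shows "quotient_of (of_int (2*m+1) / of_int (m+1)) = (2*m+1, m+1)"
proof -
  have c: "coprime (2*m+1) (m+1)"
  proof (rule coprimeI)
    fix c assume c1: "c dvd 2*m+1" and c2: "c dvd m+1"
    have "c dvd 2*(m+1)" using c2 by (rule dvd_mult)
    hence "c dvd 2*(m+1) - (2*m+1)" using c1 by (rule dvd_diff)
    thus "c dvd 1" by simp
  qed
  have "of_int (2*m+1) / of_int (m+1) = Fract (2*m+1) (m+1)" by (simp add: Fract_of_int_quotient)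
  then show ?thesis using c m by (simp add: quotient_of_Fract)
qed

lemma rm_valid:
  fixes m :: int
  assumes m: "m \<ge> 1"
  shows "numerical_monoid UNIV \<and> (of_int (2*m+1) / of_int (m+1) :: rat) > 0
       \<and> (of_int (2*m+1) / of_int (m+1) :: rat) \<notin> \<nat> \<and> rat_num (of_int (2*m+1) / of_int (m+1)) > 1"
proof -
  have q: "quotient_of (of_int (2*m+1) / of_int (m+1)) = (2*m+1, m+1)" using rm_props[OF m] .
  have "(of_int (2*m+1) / of_int (m+1) :: rat) \<notin> \<nat>"
  proof
    assume "(of_int (2*m+1) / of_int (m+1) :: rat) \<in> \<nat>"
    then obtain k where "(of_int (2*m+1) / of_int (m+1) :: rat) = of_nat k" by (auto elim: Nats_cases)
    hence "quotient_of (of_int (2*m+1) / of_int (m+1)) = (int k, 1)" by simp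
    thus False using q m by simp
  qed
  moreover have "(of_int (2*m+1) / of_int (m+1) :: rat) > 0" using m by simp
  moreover have "numerical_monoid UNIV" unfolding numerical_monoid_def by simp
  ultimately show ?thesis using q m unfolding rat_num_def by simp
qed

lemma len_prop:
  fixes m :: int
  assumes m: "m \<ge> 1"
    and L: "L \<in> system_of_lengths (exp_puiseux (of_int (2*m+1) / of_int (m+1)) UNIV)"
  shows "L \<noteq> {} \<and> (\<forall>l1\<in>L. \<forall>l2\<in>L. m dvd int l1 - int l2)"
proof -
  define r :: rat where "r = of_int (2*m+1) / of_int (m+1)"
  have a: "2*m+1 \<ge> 2" and b: "m+1 \<ge> 2" using m by auto
  have cop: "coprime (2*m+1) (m+1)" using quotient_of_coprime[OF rm_props[OF m]] .
  have At: "atoms (exp_puiseux r UNIV) = range (\<lambda>k. r^k)" using atoms_eq[OF r_def a b cop] .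
  have "\<exists>x. L = lengths (exp_puiseux r UNIV) x \<and> x \<in> exp_puiseux r UNIV"
    using L unfolding system_of_lengths_def r_def mem_Collect_eq .
  then obtain x where xM: "x \<in> exp_puiseux r UNIV" and Lx: "L = lengths (exp_puiseux r UNIV) x"
    by blast
  have "\<exists>F. x = sum_mset F \<and> set_mset F \<subseteq> {r ^ k | k. k \<in> UNIV}"
    using xM unfolding exp_puiseux_def gen_monoid_def mem_Collect_eq .
  then obtain F where F: "set_mset F \<subseteq> {r ^ k | k. k \<in> UNIV}" "x = sum_mset F"
    by blast
  have FA: "set_mset F \<subseteq> range (\<lambda>k. r^k)" using F(1) by auto
  have "size F \<in> L" unfolding Lx lengths_def At
    by (intro CollectI exI[of _ F] conjI FA) (simp_all add: F(2))
  hence ne: "L \<noteq> {}" by auto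
  have "\<forall>l1\<in>L. \<forall>l2\<in>L. m dvd int l1 - int l2"
  proof (intro ballI)
    fix l1 l2 assume l1: "l1 \<in> L" and l2: "l2 \<in> L"
    have "\<exists>F1. l1 = size F1 \<and> set_mset F1 \<subseteq> range (\<lambda>k. r^k) \<and> sum_mset F1 = x"
      using l1 unfolding Lx lengths_def At mem_Collect_eq .
    then obtain F1 where F1: "l1 = size F1" "set_mset F1 \<subseteq> range (\<lambda>k. r^k)" "sum_mset F1 = x"
      by blast
    have "\<exists>F2. l2 = size F2 \<and> set_mset F2 \<subseteq> range (\<lambda>k. r^k) \<and> sum_mset F2 = x"
      using l2 unfolding Lx lengths_def At mem_Collect_eq .
    then obtain F2 where F2: "l2 = size F2" "set_mset F2 \<subseteq> range (\<lambda>k. r^k)" "sum_mset F2 = x"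
      by blast
    obtain E1 where E1: "F1 = image_mset (\<lambda>k. r^k) E1" using mset_image_ex[OF F1(2)] by blast
    obtain E2 where E2: "F2 = image_mset (\<lambda>k. r^k) E2" using mset_image_ex[OF F2(2)] by blast
    have "(\<Sum>k\<in>#E1. r^k) = (\<Sum>k\<in>#E2. r^k)" using F1(3) F2(3) E1 E2 by simp
    hence "m dvd int (size E1) - int (size E2)" using cong_len[OF m] unfolding r_def by blast
    thus "m dvd int l1 - int l2" using F1(1) F2(1) E1 E2 by simp
  qed
  with ne show ?thesis by blast
qed

lemma test1:
  fixes A :: "nat set set"
  assumes "\<exists>r N. A = system_of_lengths (exp_puiseux r N) \<and> (numerical_monoid N \<and> r > 0 \<and> r \<notin> \<nat> \<and> rat_num r > 1)"
  shows "{n} \<in> A"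
  using assms
proof (elim exE conjE)
  fix r N assume A: "A = system_of_lengths (exp_puiseux r N)" and c: "numerical_monoid N" "0 < r" "r \<notin> \<nat>" "1 < rat_num r"
  show "{n} \<in> A" unfolding A by (rule sing_in[OF c])
qed

lemma half1:
  "{{n} | n :: nat. True} \<subseteq> \<Inter> {system_of_lengths (exp_puiseux r N) | r N.
             numerical_monoid N \<and> r > 0 \<and> r \<notin> \<nat> \<and> rat_num r > 1}"
proof (rule subsetI)
  fix L assume "L \<in> {{n} | n :: nat. True}"
  hence "\<exists>n. L = {n} \<and> True" unfolding mem_Collect_eq .
  then obtain n where Ln: "L = {n}" by blast
  show "L \<in> \<Inter> {system_of_lengths (exp_puiseux r N) | r N.
             numerical_monoid N \<and> r > 0 \<and> r \<notin> \<nat> \<and> rat_num r > 1}"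
  proof (rule InterI)
    fix A assume "A \<in> {system_of_lengths (exp_puiseux r N) | r N.
           numerical_monoid N \<and> r > 0 \<and> r \<notin> \<nat> \<and> rat_num r > 1}"
    hence "\<exists>r N. A = system_of_lengths (exp_puiseux r N) \<and> (numerical_monoid N \<and> r > 0 \<and> r \<notin> \<nat> \<and> rat_num r > 1)"
      unfolding mem_Collect_eq .
    then show "L \<in> A" unfolding Ln by (rule test1)
  qed
qed

lemma fam_mem:
  assumes "numerical_monoid N \<and> r > 0 \<and> r \<notin> \<nat> \<and> rat_num r > 1"
  shows "system_of_lengths (exp_puiseux r N) \<in> {system_of_lengths (exp_puiseux r N) | r N.
             numerical_monoid N \<and> r > 0 \<and> r \<notin> \<nat> \<and> rat_num r > 1}"
  using assms by blast

lemma half2: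
  "\<Inter> {system_of_lengths (exp_puiseux r N) | r N.
             numerical_monoid N \<and> r > 0 \<and> r \<notin> \<nat> \<and> rat_num r > 1} \<subseteq> {{n} | n :: nat. True}"
  proof
    fix L assume L: "L \<in> \<Inter> {system_of_lengths (exp_puiseux r N) | r N.
             numerical_monoid N \<and> r > 0 \<and> r \<notin> \<nat> \<and> rat_num r > 1}"
    have LL: "L \<noteq> {} \<and> (\<forall>l1\<in>L. \<forall>l2\<in>L. m dvd int l1 - int l2)" if m: "m \<ge> 1" for m :: int
    proof -
      have "system_of_lengths (exp_puiseux (of_int (2*m+1) / of_int (m+1)) UNIV) \<in> {system_of_lengths (exp_puiseux r N) | r N.
             numerical_monoid N \<and> r > 0 \<and> r \<notin> \<nat> \<and> rat_num r > 1}"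
        by (rule fam_mem[OF rm_valid[OF m]])
      with L have "L \<in> system_of_lengths (exp_puiseux (of_int (2*m+1) / of_int (m+1)) UNIV)" by (rule InterD)
      thus ?thesis by (rule len_prop[OF m])
    qed
    have "L \<noteq> {}" by (rule conjunct1[OF LL[of 1]]) simp
    then obtain n where n: "n \<in> L" by blast
    have "\<forall>l\<in>L. l = n"
    proof
      fix l assume l: "l \<in> L"
      have "int l + int n + 1 \<ge> 1" by simp
      from conjunct2[OF LL[OF this]] have "\<forall>l1\<in>L. \<forall>l2\<in>L. int l + int n + 1 dvd int l1 - int l2" .
      hence d: "int l + int n + 1 dvd int l - int n" using l n by blast
      show "l = n"
      proof (rule ccontr)
        assume "l \<noteq> n"
        hence "\<bar>int l - int n\<bar> > 0" "int l + int n + 1 dvd \<bar>int l - int n\<bar>" using d by simp_all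
        hence "int l + int n + 1 \<le> \<bar>int l - int n\<bar>" by (intro zdvd_imp_le)
        thus False by linarith
      qed
    qed
    have "L = {n}"
    proof (rule set_eqI)
      fix x show "x \<in> L \<longleftrightarrow> x \<in> {n}" using \<open>\<forall>l\<in>L. l = n\<close> n by blast
    qed
    hence "\<exists>m. L = {m} \<and> True" by simp
    thus "L \<in> {{n} | n :: nat. True}" unfolding mem_Collect_eq .
  qed

theorem mainTheorem5:
  shows "\<Inter> {system_of_lengths (exp_puiseux r N) | r N.
             numerical_monoid N \<and> r > 0 \<and> r \<notin> \<nat> \<and> rat_num r > 1}
         = {{n} | n :: nat. True}"
  by (rule equalityI[OF half2 half1])

end
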